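(* Let $\Delta\subset\mathbb{R}^n_{\ge0}$ be a Newton polyhedron with a loose edge $E$ with endpoints $a=(a_1,\dots,a_n)$ and $b=(b_1,\dots,b_n)$. If $\min(a_1,b_1)=\dots=\min(a_n,b_n)=0$, then $a$ and $b$ are the only vertices of $\Delta$.
   Context: A Newton polyhedron is the convex hull of $S+\mathbb{R}^n_{\ge0}$ for a nonempty finite set $S\subset\mathbb{Z}^n_{\ge0}$. For $\xi\in\mathbb{R}^n_{\ge0}$, the face $\Delta^\xi=\{a\in\Delta:\langle\xi,a\rangle=\min_{b\in\Delta}\langle\xi,b\rangle\}$; it is compact iff $\xi\in\mathbb{R}^n_{>0}$. Vertices and edges are faces of dimension 0 and 1; a loose edge is a compact edge not contained in any compact face of dimension $\ge2$. *)

theory Defs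
  imports "HOL-Analysis.Analysis"
begin

definition nonneg_orthant :: "(real ^ 'n) set" where
  "nonneg_orthant = {v. \<forall>i. 0 \<le> v $ i}"

definition newton_polyhedron_of :: "(real ^ 'n) set \<Rightarrow> (real ^ 'n) set" where
  "newton_polyhedron_of S = convex hull {s + v | s v. s \<in> S \<and> v \<in> nonneg_orthant}"

definition is_newton_polyhedron :: "(real ^ 'n) set \<Rightarrow> bool" where
  "is_newton_polyhedron \<Delta> \<longleftrightarrow>
     (\<exists>S. finite S \<and> S \<noteq> {} \<and> (\<forall>s\<in>S. \<forall>i. s $ i \<in> \<nat>) \<and> \<Delta> = newton_polyhedron_of S)"

definition face_dir :: "(real ^ 'n) set \<Rightarrow> real ^ 'n \<Rightarrow> (real ^ 'n) set" where
  "face_dir \<Delta> \<xi> = {a \<in> \<Delta>. \<forall>b\<in>\<Delta>. \<xi> \<bullet> a \<le> \<xi> \<bullet> b}"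

definition is_face :: "(real ^ 'n) set \<Rightarrow> (real ^ 'n) set \<Rightarrow> bool" where
  "is_face \<Delta> F \<longleftrightarrow> (\<exists>\<xi> \<in> nonneg_orthant. F = face_dir \<Delta> \<xi>)"

definition is_compact_face :: "(real ^ 'n) set \<Rightarrow> (real ^ 'n) set \<Rightarrow> bool" where
  "is_compact_face \<Delta> F \<longleftrightarrow> is_face \<Delta> F \<and> compact F"

definition is_vertex :: "(real ^ 'n) set \<Rightarrow> real ^ 'n \<Rightarrow> bool" where
  "is_vertex \<Delta> v \<longleftrightarrow> is_face \<Delta> {v}"

definition is_edge :: "(real ^ 'n) set \<Rightarrow> (real ^ 'n) set \<Rightarrow> bool" where
  "is_edge \<Delta> E \<longleftrightarrow> is_face \<Delta> E \<and> aff_dim E = 1"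

definition is_loose_edge :: "(real ^ 'n) set \<Rightarrow> (real ^ 'n) set \<Rightarrow> bool" where
  "is_loose_edge \<Delta> E \<longleftrightarrow> is_edge \<Delta> E \<and> compact E \<and>
     \<not> (\<exists>F. is_compact_face \<Delta> F \<and> aff_dim F \<ge> 2 \<and> E \<subseteq> F)"

end

theory Submission
  imports Defs "HOL-Library.Set_Algebras"
begin

lemma orth_mem: "v \<in> nonneg_orthant \<longleftrightarrow> (\<forall>i. 0 \<le> v $ i)"
  by (simp add: nonneg_orthant_def)

lemma convex_orth: "convex (nonneg_orthant :: (real^'n) set)"
  unfolding convex_def nonneg_orthant_def by simp

lemma closed_orth: "closed (nonneg_orthant :: (real^'n) set)"
  unfolding nonneg_orthant_def by (rule closed_positive_orthant)

lemma orth_add: "v \<in> nonneg_orthant \<Longrightarrow> w \<in> nonneg_orthant \<Longrightarrow> v + w \<in> nonneg_orthant"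
  by (simp add: orth_mem)

lemma inner_orth: "x \<in> nonneg_orthant \<Longrightarrow> y \<in> nonneg_orthant \<Longrightarrow> 0 \<le> x \<bullet> (y::real^'n)"
  unfolding inner_vec_def orth_mem by (auto intro!: sum_nonneg)

lemma np_rep: "newton_polyhedron_of S = convex hull S + (nonneg_orthant :: (real^'n) set)"
proof -
  have "{s + v | s v. s \<in> S \<and> v \<in> nonneg_orthant} = S + (nonneg_orthant :: (real^'n) set)"
    by (auto simp: set_plus_def)
  then show ?thesis
    unfolding newton_polyhedron_of_def
    by (simp add: convex_hull_set_plus convex_hull_eq[THEN iffD2, OF convex_orth])
qed

lemma np_closed: "finite S \<Longrightarrow> closed (newton_polyhedron_of (S :: (real^'n) set))"
proof -
  assume "finite S"
  then have "compact (convex hull S)" by (simp add: finite_imp_compact_convex_hull)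
  then have "closed (\<Union>x\<in>nonneg_orthant. \<Union>y\<in>convex hull S. {x + y})"
    by (intro closed_compact_sums closed_orth)
  moreover have "(\<Union>x\<in>nonneg_orthant. \<Union>y\<in>convex hull S. {x + y}) = newton_polyhedron_of S"
    unfolding np_rep set_plus_def by (auto; metis add.commute)
  ultimately show ?thesis by simp
qed

lemma np_halfspace:
  assumes "\<xi> \<in> nonneg_orthant" "\<forall>s\<in>S. r \<le> \<xi> \<bullet> s" "p \<in> newton_polyhedron_of S"
  shows "r \<le> \<xi> \<bullet> (p::real^'n)"
proof -
  obtain c w where c: "c \<in> convex hull S" and w: "w \<in> nonneg_orthant" and p: "p = c + w"
    using assms(3) unfolding np_rep set_plus_def by blast
  have "convex hull S \<subseteq> {x. r \<le> \<xi> \<bullet> x}"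
    using assms(2) by (intro hull_minimal) (auto simp: convex_halfspace_ge)
  with c have "r \<le> \<xi> \<bullet> c" by auto
  moreover have "0 \<le> \<xi> \<bullet> w" using inner_orth[OF assms(1) w] .
  ultimately show ?thesis by (simp add: p inner_add_right)
qed

lemma np_up: "p \<in> newton_polyhedron_of S \<Longrightarrow> w \<in> nonneg_orthant \<Longrightarrow> p + w \<in> newton_polyhedron_of S"
proof -
  assume "p \<in> newton_polyhedron_of S" "w \<in> nonneg_orthant"
  then obtain c v where "c \<in> convex hull S" "v \<in> nonneg_orthant" "p = c + v"
    unfolding np_rep set_plus_def by blast
  then show ?thesis unfolding np_rep set_plus_def
    using orth_add[of v w] \<open>w \<in> nonneg_orthant\<close> by (auto simp: add.assoc)
qed

lemma np_S: "S \<subseteq> newton_polyhedron_of (S :: (real^'n) set)"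
proof
  fix x assume "x \<in> S"
  then have "x + 0 \<in> convex hull S + nonneg_orthant"
    by (intro set_plus_intro hull_inc) (auto simp: orth_mem)
  then show "x \<in> newton_polyhedron_of S" by (simp add: np_rep)
qed

lemma np_orth:
  assumes "\<forall>s\<in>S. \<forall>i. s $ i \<in> \<nat>"
  shows "newton_polyhedron_of S \<subseteq> (nonneg_orthant :: (real^'n) set)"
proof -
  have "S \<subseteq> nonneg_orthant" using assms by (auto simp: orth_mem) (metis Nats_cases of_nat_0_le_iff)
  then have "convex hull S \<subseteq> nonneg_orthant" by (intro hull_minimal convex_orth)
  then show ?thesis unfolding np_rep set_plus_def by (auto intro: orth_add)
qed

lemma axis_inner: "axis i (1::real) \<bullet> (x::real^'n) = x $ i"
  by (simp add: inner_commute inner_axis)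

lemma axis_orth: "axis i (1::real) \<in> (nonneg_orthant :: (real^'n) set)"
  by (simp add: orth_mem axis_def)

lemma face_compact:
  assumes "closed D" "D \<subseteq> nonneg_orthant" "\<forall>k. 0 < \<eta> $ k"
  shows "compact (face_dir D (\<eta>::real^'n))"
proof (cases "face_dir D \<eta> = {}")
  case True then show ?thesis by simp
next
  case False
  then obtain q0 where q0: "q0 \<in> face_dir D \<eta>" by blast
  then have q0D: "q0 \<in> D" and q0m: "\<forall>b\<in>D. \<eta> \<bullet> q0 \<le> \<eta> \<bullet> b" by (auto simp: face_dir_def)
  have eq: "face_dir D \<eta> = D \<inter> {p. \<eta> \<bullet> p \<le> \<eta> \<bullet> q0}"
    using q0D q0m by (auto simp: face_dir_def intro: order_trans)
  have cl: "closed (face_dir D \<eta>)" unfolding eq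
    by (intro closed_Int assms(1) closed_halfspace_le)
  have "face_dir D \<eta> \<subseteq> cbox 0 (\<chi> k. (\<eta> \<bullet> q0) / \<eta> $ k)"
  proof
    fix p assume p: "p \<in> face_dir D \<eta>"
    then have pD: "p \<in> D" and pl: "\<eta> \<bullet> p \<le> \<eta> \<bullet> q0" unfolding eq by auto
    have pnn: "\<forall>i. 0 \<le> p $ i" using pD assms(2) by (auto simp: orth_mem)
    show "p \<in> cbox 0 (\<chi> k. (\<eta> \<bullet> q0) / \<eta> $ k)"
      unfolding mem_box_cart
    proof
      fix k
      have "\<eta> $ k * p $ k \<le> (\<Sum>i\<in>UNIV. \<eta> $ i * p $ i)"
      proof (rule member_le_sum)
        fix x show "0 \<le> \<eta> $ x * p $ x" using pnn assms(3) less_imp_le[of 0 "\<eta> $ x"] by simp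
      qed simp_all
      also have "\<dots> = \<eta> \<bullet> p" by (simp add: inner_vec_def)
      finally have "\<eta> $ k * p $ k \<le> \<eta> \<bullet> q0" using pl by simp
      then have "p $ k \<le> (\<eta> \<bullet> q0) / \<eta> $ k"
        using assms(3) by (simp add: pos_le_divide_eq mult.commute)
      then show "0 $ k \<le> p $ k \<and> p $ k \<le> (\<chi> k. (\<eta> \<bullet> q0) / \<eta> $ k) $ k"
        using pnn by simp
    qed
  qed
  then have "bounded (face_dir D \<eta>)" using bounded_cbox bounded_subset by blast
  then show ?thesis using cl by (simp add: compact_eq_bounded_closed)
qed

theorem lemma2p2:
  fixes \<Delta> E :: "(real ^ 'n) set" and a b :: "real ^ 'n"
  assumes "is_newton_polyhedron \<Delta>"
    and "is_loose_edge \<Delta> E"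
    and "a \<noteq> b" and "E = closed_segment a b"
    and "\<forall>i. min (a $ i) (b $ i) = 0"
  shows "{v. is_vertex \<Delta> v} = {a, b}"
proof -
  obtain S where Sfin: "finite S" and Snat: "\<forall>s\<in>S. \<forall>i. s $ i \<in> \<nat>"
    and DS: "\<Delta> = newton_polyhedron_of S"
    using assms(1) unfolding is_newton_polyhedron_def by blast
  have Dcl: "closed \<Delta>" using np_closed[OF Sfin] DS by simp
  have Dorth: "\<Delta> \<subseteq> nonneg_orthant" using np_orth[OF Snat] DS by simp
  have Dup: "\<And>p w. p \<in> \<Delta> \<Longrightarrow> w \<in> nonneg_orthant \<Longrightarrow> p + w \<in> \<Delta>"
    using np_up DS by blast
  have SD: "S \<subseteq> \<Delta>" using np_S DS by blast
  have Dhalf: "\<And>\<xi> r p. \<xi> \<in> nonneg_orthant \<Longrightarrow> \<forall>s\<in>S. r \<le> \<xi> \<bullet> s \<Longrightarrow> p \<in> \<Delta> \<Longrightarrow> r \<le> \<xi> \<bullet> p"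
    using np_halfspace DS by blast
  have Dnn: "\<And>p i. p \<in> \<Delta> \<Longrightarrow> 0 \<le> p $ i" using Dorth by (auto simp: orth_mem)
  obtain \<xi>0 where x0: "\<xi>0 \<in> nonneg_orthant" and E0: "E = face_dir \<Delta> \<xi>0"
    using assms(2) unfolding is_loose_edge_def is_edge_def is_face_def by blast
  have loose: "\<not> (\<exists>F. is_compact_face \<Delta> F \<and> aff_dim F \<ge> 2 \<and> E \<subseteq> F)"
    using assms(2) unfolding is_loose_edge_def by blast
  have aE: "a \<in> E" and bE: "b \<in> E" using assms(4) by auto
  have ED: "E \<subseteq> \<Delta>" using E0 by (auto simp: face_dir_def)
  have aD: "a \<in> \<Delta>" and bD: "b \<in> \<Delta>" using aE bE ED by auto
  have amin: "\<forall>q\<in>\<Delta>. \<xi>0 \<bullet> a \<le> \<xi>0 \<bullet> q" and bmin: "\<forall>q\<in>\<Delta>. \<xi>0 \<bullet> b \<le> \<xi>0 \<bullet> q"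
    using aE bE E0 by (auto simp: face_dir_def)
  have ab0: "\<xi>0 \<bullet> a = \<xi>0 \<bullet> b" using amin bmin aD bD by (meson antisym)
  have Eiff: "\<And>p. p \<in> \<Delta> \<Longrightarrow> \<xi>0 \<bullet> p \<le> \<xi>0 \<bullet> a \<Longrightarrow> p \<in> E"
    using amin E0 by (auto simp: face_dir_def intro: order_trans)
  have segE: "\<And>p. p \<in> E \<Longrightarrow> \<exists>u. 0 \<le> u \<and> u \<le> 1 \<and> p = (1 - u) *\<^sub>R a + u *\<^sub>R b"
    using assms(4) unfolding closed_segment_def by blast
  have ab_cases: "\<And>k. (a $ k = 0 \<and> 0 \<le> b $ k) \<or> (b $ k = 0 \<and> 0 \<le> a $ k)"
    using assms(5) by (metis min_def order.strict_implies_order linorder_not_le)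
  have pos0: "\<forall>k. 0 < \<xi>0 $ k"
  proof
    fix k
    show "0 < \<xi>0 $ k"
    proof (rule ccontr)
      assume "\<not> 0 < \<xi>0 $ k"
      then have z: "\<xi>0 $ k = 0" using x0 by (auto simp: orth_mem intro: antisym)
      define t where "t = 2 * \<bar>a $ k\<bar> + \<bar>b $ k\<bar> + 1"
      have t0: "0 \<le> t" by (simp add: t_def)
      define p where "p = a + t *\<^sub>R axis k 1"
      have pD: "p \<in> \<Delta>" unfolding p_def
        by (rule Dup[OF aD]) (use t0 in \<open>simp add: orth_mem axis_def\<close>)
      have "\<xi>0 \<bullet> p = \<xi>0 \<bullet> a" unfolding p_def by (simp add: inner_add_right inner_axis z)
      then have "p \<in> E" using Eiff pD by simp
      then obtain u where u: "0 \<le> u" "u \<le> 1" "p = (1 - u) *\<^sub>R a + u *\<^sub>R b" using segE by blast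
      then have "p $ k = ((1 - u) *\<^sub>R a + u *\<^sub>R b) $ k" by simp
      then have "a $ k + t = (1 - u) * a $ k + u * b $ k" by (simp add: p_def axis_def)
      moreover have "(1 - u) * a $ k \<le> \<bar>a $ k\<bar>"
      proof -
        have "(1 - u) * a $ k \<le> (1 - u) * \<bar>a $ k\<bar>" using u by (intro mult_left_mono) auto
        also have "\<dots> \<le> 1 * \<bar>a $ k\<bar>" using u by (intro mult_right_mono) auto
        finally show ?thesis by simp
      qed
      moreover have "u * b $ k \<le> \<bar>b $ k\<bar>"
      proof -
        have "u * b $ k \<le> u * \<bar>b $ k\<bar>" using u by (intro mult_left_mono) auto
        also have "\<dots> \<le> 1 * \<bar>b $ k\<bar>" using u by (intro mult_right_mono) auto
        finally show ?thesis by simp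
      qed
      moreover have "a $ k \<ge> - \<bar>a $ k\<bar>" by simp
      ultimately show False unfolding t_def by linarith
    qed
  qed
  have key: "\<And>\<xi> p. \<xi> \<in> nonneg_orthant \<Longrightarrow> \<xi> \<bullet> a = \<xi> \<bullet> b \<Longrightarrow> p \<in> \<Delta> \<Longrightarrow> \<xi> \<bullet> a \<le> \<xi> \<bullet> p"
  proof (rule ccontr)
    fix \<xi> p
    assume xo: "\<xi> \<in> nonneg_orthant" and xab: "\<xi> \<bullet> a = \<xi> \<bullet> b" and pD: "p \<in> \<Delta>"
      and np: "\<not> \<xi> \<bullet> a \<le> \<xi> \<bullet> p"
    have "\<not> (\<forall>s\<in>S. \<xi> \<bullet> a \<le> \<xi> \<bullet> s)" using Dhalf[OF xo _ pD] np by blast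
    define N where "N = {s\<in>S. \<xi> \<bullet> s < \<xi> \<bullet> a}"
    have Nne: "N \<noteq> {}" using \<open>\<not> (\<forall>s\<in>S. \<xi> \<bullet> a \<le> \<xi> \<bullet> s)\<close> by (auto simp: N_def)
    have Nfin: "finite N" using Sfin by (simp add: N_def)
    define g0 where "g0 s = \<xi>0 \<bullet> s - \<xi>0 \<bullet> a" for s
    define g1 where "g1 s = \<xi> \<bullet> s - \<xi> \<bullet> a" for s
    define th where "th s = g0 s / (g0 s - g1 s)" for s
    have g0nn: "\<And>s. s \<in> S \<Longrightarrow> 0 \<le> g0 s" using amin SD by (auto simp: g0_def)
    have g1N: "\<And>s. s \<in> N \<Longrightarrow> g1 s < 0" by (auto simp: g1_def N_def)
    define \<theta> where "\<theta> = Min (th ` N)"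
    obtain s1 where s1N: "s1 \<in> N" and s1th: "th s1 = \<theta>"
    proof -
      have "\<theta> \<in> th ` N" unfolding \<theta>_def using Nne Nfin by (intro Min_in) auto
      then show ?thesis using that by auto
    qed
    have thle: "\<And>s. s \<in> N \<Longrightarrow> \<theta> \<le> th s" using Nfin by (auto simp: \<theta>_def)
    have s1S: "s1 \<in> S" using s1N by (simp add: N_def)
    have dpos: "0 < g0 s1 - g1 s1" using g0nn[OF s1S] g1N[OF s1N] by simp
    have th0: "0 \<le> \<theta>" using s1th dpos g0nn[OF s1S] by (auto simp: th_def)
    have th1: "\<theta> < 1" using s1th dpos g0nn[OF s1S] g1N[OF s1N] by (auto simp: th_def divide_less_eq)
    have th_eq: "\<theta> * (g0 s1 - g1 s1) = g0 s1" using s1th dpos by (auto simp: th_def)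
    define \<eta> where "\<eta> = (1 - \<theta>) *\<^sub>R \<xi>0 + \<theta> *\<^sub>R \<xi>"
    have \<eta>inner: "\<And>x. \<eta> \<bullet> x = (1 - \<theta>) * (\<xi>0 \<bullet> x) + \<theta> * (\<xi> \<bullet> x)"
      by (simp add: \<eta>_def inner_add_left)
    have \<eta>pos: "\<forall>k. 0 < \<eta> $ k"
    proof
      fix k
      have "0 < (1 - \<theta>) * \<xi>0 $ k" using th1 pos0 by simp
      moreover have "0 \<le> \<theta> * \<xi> $ k" using th0 xo by (simp add: orth_mem)
      ultimately show "0 < \<eta> $ k" by (simp add: \<eta>_def)
    qed
    have \<eta>o: "\<eta> \<in> nonneg_orthant" using \<eta>pos by (auto simp: orth_mem intro: less_imp_le)
    have \<eta>diff: "\<And>s. \<eta> \<bullet> s - \<eta> \<bullet> a = (1 - \<theta>) * g0 s + \<theta> * g1 s"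
      by (simp add: \<eta>inner g0_def g1_def algebra_simps)
    have \<eta>S: "\<forall>s\<in>S. \<eta> \<bullet> a \<le> \<eta> \<bullet> s"
    proof
      fix s assume sS: "s \<in> S"
      have "0 \<le> (1 - \<theta>) * g0 s + \<theta> * g1 s"
      proof (cases "s \<in> N")
        case True
        have d: "0 < g0 s - g1 s" using g0nn[OF sS] g1N[OF True] by simp
        have "\<theta> \<le> g0 s / (g0 s - g1 s)" using thle[OF True] by (simp add: th_def)
        then have "\<theta> * (g0 s - g1 s) \<le> g0 s" using d by (simp add: le_divide_eq)
        then show ?thesis by (simp add: algebra_simps)
      next
        case False
        then have "0 \<le> g1 s" using sS by (auto simp: N_def g1_def)
        then show ?thesis using g0nn[OF sS] th0 th1 by simp
      qed
      then show "\<eta> \<bullet> a \<le> \<eta> \<bullet> s" using \<eta>diff[of s] by simp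
    qed
    have \<eta>ab: "\<eta> \<bullet> a = \<eta> \<bullet> b" using ab0 xab by (simp add: \<eta>inner)
    have \<eta>s1: "\<eta> \<bullet> s1 = \<eta> \<bullet> a" using \<eta>diff[of s1] th_eq by (simp add: algebra_simps)
    define F where "F = face_dir \<Delta> \<eta>"
    have inF: "\<And>x. x \<in> \<Delta> \<Longrightarrow> \<eta> \<bullet> x = \<eta> \<bullet> a \<Longrightarrow> x \<in> F"
      unfolding F_def face_dir_def using Dhalf[OF \<eta>o \<eta>S] by auto
    have EF: "E \<subseteq> F"
    proof
      fix x assume xE: "x \<in> E"
      then obtain u where "x = (1 - u) *\<^sub>R a + u *\<^sub>R b" using segE by blast
      then have "\<eta> \<bullet> x = (1 - u) * (\<eta> \<bullet> a) + u * (\<eta> \<bullet> b)" by (simp add: inner_add_right)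
      then have "\<eta> \<bullet> x = \<eta> \<bullet> a" using \<eta>ab by (simp add: algebra_simps)
      then show "x \<in> F" using inF xE ED by auto
    qed
    have s1F: "s1 \<in> F" using inF s1S SD \<eta>s1 by auto
    have cF: "compact F" unfolding F_def by (rule face_compact[OF Dcl Dorth \<eta>pos])
    have s1nh: "s1 \<notin> affine hull {a, b}"
    proof
      assume "s1 \<in> affine hull {a, b}"
      then obtain u v where "s1 = u *\<^sub>R a + v *\<^sub>R b" "u + v = 1" by (auto simp: affine_hull_2)
      then have "\<xi> \<bullet> s1 = \<xi> \<bullet> a" using xab by (simp add: inner_add_right flip: distrib_right)
      then show False using s1N by (simp add: N_def)
    qed
    have "\<not> collinear {a, b, s1}" using collinear_3_affine_hull[OF assms(3)] s1nh by blast
    then have ind: "\<not> affine_dependent {a, b, s1}" using affine_dependent_imp_collinear_3 by blast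
    have dist: "s1 \<noteq> a" "s1 \<noteq> b" using s1nh by (auto intro: hull_inc)
    have "card {a, b, s1} = 3" using dist assms(3) by auto
    then have "aff_dim {a, b, s1} = 2" using aff_dim_affine_independent[OF ind] by simp
    moreover have "aff_dim {a, b, s1} \<le> aff_dim F"
      using EF aE bE s1F by (intro aff_dim_subset) auto
    ultimately have "aff_dim F \<ge> 2" by simp
    moreover have "is_compact_face \<Delta> F"
      unfolding is_compact_face_def is_face_def using cF \<eta>o F_def by blast
    ultimately show False using loose EF by blast
  qed
  have supp: "\<exists>i. 0 < a $ i" "\<exists>j. 0 < b $ j"
  proof -
    show "\<exists>i. 0 < a $ i"
    proof (rule ccontr)
      assume "\<not> (\<exists>i. 0 < a $ i)"
      then have a0: "a = 0" using Dnn[OF aD] by (auto simp: vec_eq_iff not_less intro: antisym)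
      have bo: "b \<in> nonneg_orthant" using Dorth bD by auto
      have "b + b \<in> \<Delta>" by (rule Dup[OF bD bo])
      moreover have "\<xi>0 \<bullet> (b + b) \<le> \<xi>0 \<bullet> a" using ab0 a0 by (simp only: inner_add_right) simp
      ultimately have "b + b \<in> E" using Eiff by blast
      then obtain u where u: "0 \<le> u" "u \<le> 1" "b + b = (1 - u) *\<^sub>R a + u *\<^sub>R b" using segE by blast
      have "b = 0"
      unfolding vec_eq_iff proof
        fix i
        have "(b + b) $ i = ((1 - u) *\<^sub>R a + u *\<^sub>R b) $ i" using u(3) by simp
        then have "(2 - u) * b $ i = 0" using a0 by (simp add: algebra_simps)
        then show "b $ i = 0 $ i" using u by simp
      qed
      then show False using a0 assms(3) by simp
    qed
    show "\<exists>j. 0 < b $ j"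
    proof (rule ccontr)
      assume "\<not> (\<exists>j. 0 < b $ j)"
      then have b0: "b = 0" using Dnn[OF bD] by (auto simp: vec_eq_iff not_less intro: antisym)
      have ao: "a \<in> nonneg_orthant" using Dorth aD by auto
      have "a + a \<in> \<Delta>" by (rule Dup[OF aD ao])
      moreover have "\<xi>0 \<bullet> (a + a) \<le> \<xi>0 \<bullet> a" using ab0 b0 by (simp only: inner_add_right) simp
      ultimately have "a + a \<in> E" using Eiff by blast
      then obtain u where u: "0 \<le> u" "u \<le> 1" "a + a = (1 - u) *\<^sub>R a + u *\<^sub>R b" using segE by blast
      have "a = 0"
      unfolding vec_eq_iff proof
        fix i
        have "(a + a) $ i = ((1 - u) *\<^sub>R a + u *\<^sub>R b) $ i" using u(3) by simp
        then have "(1 + u) * a $ i = 0" using b0 by (simp add: algebra_simps)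
        then show "a $ i = 0 $ i" using u by simp
      qed
      then show False using b0 assms(3) by simp
    qed
  qed
  have step2: "\<And>p. p \<in> \<Delta> \<Longrightarrow> \<exists>u w. 0 \<le> u \<and> u \<le> 1 \<and> w \<in> nonneg_orthant \<and> p = (1 - u) *\<^sub>R a + u *\<^sub>R b + w"
  proof -
    fix p assume pD: "p \<in> \<Delta>"
    define A where "A = {i. 0 < a $ i}"
    define B where "B = {i. 0 < b $ i}"
    have Ane: "A \<noteq> {}" and Bne: "B \<noteq> {}" using supp by (auto simp: A_def B_def)
    have Afin: "finite A" and Bfin: "finite B" by auto
    define \<alpha> where "\<alpha> = Min ((\<lambda>i. p $ i / a $ i) ` A)"
    define \<beta> where "\<beta> = Min ((\<lambda>i. p $ i / b $ i) ` B)"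
    have "\<alpha> \<in> (\<lambda>i. p $ i / a $ i) ` A" unfolding \<alpha>_def using Ane Afin by (intro Min_in) auto
    then obtain ia where iaA: "ia \<in> A" and ia\<alpha>: "\<alpha> = p $ ia / a $ ia" by blast
    have "\<beta> \<in> (\<lambda>i. p $ i / b $ i) ` B" unfolding \<beta>_def using Bne Bfin by (intro Min_in) auto
    then obtain jb where jbB: "jb \<in> B" and jb\<beta>: "\<beta> = p $ jb / b $ jb" by blast
    have \<alpha>le: "\<And>i. i \<in> A \<Longrightarrow> \<alpha> * a $ i \<le> p $ i"
    proof -
      fix i assume iA: "i \<in> A"
      then have "\<alpha> \<le> p $ i / a $ i" unfolding \<alpha>_def using Afin by (intro Min_le) auto
      then show "\<alpha> * a $ i \<le> p $ i" using iA by (simp add: A_def le_divide_eq)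
    qed
    have \<beta>le: "\<And>i. i \<in> B \<Longrightarrow> \<beta> * b $ i \<le> p $ i"
    proof -
      fix i assume iB: "i \<in> B"
      then have "\<beta> \<le> p $ i / b $ i" unfolding \<beta>_def using Bfin by (intro Min_le) auto
      then show "\<beta> * b $ i \<le> p $ i" using iB by (simp add: B_def le_divide_eq)
    qed
    have aia: "0 < a $ ia" using iaA by (simp add: A_def)
    have bjb: "0 < b $ jb" using jbB by (simp add: B_def)
    have bia: "b $ ia = 0" using ab_cases[of ia] aia by auto
    have ajb: "a $ jb = 0" using ab_cases[of jb] bjb by auto
    define \<xi> where "\<xi> = (1 / a $ ia) *\<^sub>R axis ia 1 + (1 / b $ jb) *\<^sub>R axis jb (1::real)"
    have xi: "\<And>x. \<xi> \<bullet> x = x $ ia / a $ ia + x $ jb / b $ jb"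
      by (simp add: \<xi>_def inner_add_left axis_inner)
    have xo: "\<xi> \<in> nonneg_orthant"
      using aia bjb by (simp add: orth_mem \<xi>_def axis_def)
    have "\<xi> \<bullet> a = 1" "\<xi> \<bullet> b = 1" using aia bjb ajb bia by (simp_all add: xi)
    then have "1 \<le> \<xi> \<bullet> p" using key[OF xo _ pD] by simp
    then have ab1: "1 \<le> \<alpha> + \<beta>" by (simp add: xi ia\<alpha> jb\<beta>)
    have \<alpha>0: "0 \<le> \<alpha>" using ia\<alpha> aia Dnn[OF pD] by simp
    have \<beta>0: "0 \<le> \<beta>" using jb\<beta> bjb Dnn[OF pD] by simp
    define l where "l = min \<alpha> 1"
    define w where "w = p - ((1 - (1 - l)) *\<^sub>R a + (1 - l) *\<^sub>R b)"
    have wo: "w \<in> nonneg_orthant"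
      unfolding orth_mem
    proof
      fix k
      have pk: "0 \<le> p $ k" using Dnn[OF pD] .
      have "l * a $ k + (1 - l) * b $ k \<le> p $ k"
      proof (cases "0 < a $ k")
        case True
        then have "b $ k = 0" using ab_cases[of k] by auto
        moreover have "\<alpha> * a $ k \<le> p $ k" using \<alpha>le True by (simp add: A_def)
        moreover have "l * a $ k \<le> \<alpha> * a $ k" using True by (simp add: l_def mult_right_mono)
        ultimately show ?thesis by simp
      next
        case False
        then have ak: "a $ k = 0" using ab_cases[of k] by auto
        show ?thesis
        proof (cases "0 < b $ k")
          case True
          have "\<beta> * b $ k \<le> p $ k" using \<beta>le True by (simp add: B_def)
          moreover have "1 - l \<le> \<beta>" using ab1 \<beta>0 by (simp add: l_def)
          then have "(1 - l) * b $ k \<le> \<beta> * b $ k" using True by (simp add: mult_right_mono)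
          ultimately show ?thesis using ak by simp
        next
          case False
          then have "b $ k = 0" using ab_cases[of k] ak by auto
          then show ?thesis using ak pk by simp
        qed
      qed
      then show "0 \<le> w $ k" by (simp add: w_def)
    qed
    have "0 \<le> 1 - l" "1 - l \<le> 1" using \<alpha>0 by (auto simp: l_def)
    moreover have "p = (1 - (1 - l)) *\<^sub>R a + (1 - l) *\<^sub>R b + w" by (simp add: w_def)
    ultimately show "\<exists>u w. 0 \<le> u \<and> u \<le> 1 \<and> w \<in> nonneg_orthant \<and> p = (1 - u) *\<^sub>R a + u *\<^sub>R b + w"
      using wo by blast
  qed
  have vert_a: "is_vertex \<Delta> a"
  proof -
    obtain j where bj: "0 < b $ j" using supp(2) by blast
    have aj: "a $ j = 0" using ab_cases[of j] bj by auto
    define \<xi> where "\<xi> = \<xi>0 + axis j 1"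
    have xi: "\<And>x. \<xi> \<bullet> x = \<xi>0 \<bullet> x + x $ j" by (simp add: \<xi>_def inner_add_left axis_inner)
    have xo: "\<xi> \<in> nonneg_orthant" unfolding \<xi>_def by (rule orth_add[OF x0 axis_orth])
    have "face_dir \<Delta> \<xi> = {a}"
    proof
      show "{a} \<subseteq> face_dir \<Delta> \<xi>"
        using aD amin aj Dnn by (auto simp: face_dir_def xi intro!: add_increasing2)
      show "face_dir \<Delta> \<xi> \<subseteq> {a}"
      proof
        fix p assume "p \<in> face_dir \<Delta> \<xi>"
        then have pD: "p \<in> \<Delta>" and pl: "\<xi> \<bullet> p \<le> \<xi> \<bullet> a" using aD by (auto simp: face_dir_def)
        have "\<xi>0 \<bullet> a \<le> \<xi>0 \<bullet> p" using amin pD by auto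
        moreover have "0 \<le> p $ j" using Dnn[OF pD] .
        ultimately have pj: "p $ j = 0" and "\<xi>0 \<bullet> p \<le> \<xi>0 \<bullet> a" using pl aj by (auto simp: xi)
        then have "p \<in> E" using Eiff pD by blast
        then obtain u where u: "0 \<le> u" "u \<le> 1" "p = (1 - u) *\<^sub>R a + u *\<^sub>R b" using segE by blast
        then have "p $ j = ((1 - u) *\<^sub>R a + u *\<^sub>R b) $ j" by simp
        then have "u * b $ j = 0" using pj aj by simp
        then have "u = 0" using bj by simp
        then show "p \<in> {a}" using u by simp
      qed
    qed
    then show ?thesis unfolding is_vertex_def is_face_def using xo by blast
  qed
  have vert_b: "is_vertex \<Delta> b"
  proof -
    obtain j where aj: "0 < a $ j" using supp(1) by blast
    have bj: "b $ j = 0" using ab_cases[of j] aj by auto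
    define \<xi> where "\<xi> = \<xi>0 + axis j 1"
    have xi: "\<And>x. \<xi> \<bullet> x = \<xi>0 \<bullet> x + x $ j" by (simp add: \<xi>_def inner_add_left axis_inner)
    have xo: "\<xi> \<in> nonneg_orthant" unfolding \<xi>_def by (rule orth_add[OF x0 axis_orth])
    have "face_dir \<Delta> \<xi> = {b}"
    proof
      show "{b} \<subseteq> face_dir \<Delta> \<xi>"
        using bD bmin bj Dnn by (auto simp: face_dir_def xi intro!: add_increasing2)
      show "face_dir \<Delta> \<xi> \<subseteq> {b}"
      proof
        fix p assume "p \<in> face_dir \<Delta> \<xi>"
        then have pD: "p \<in> \<Delta>" and pl: "\<xi> \<bullet> p \<le> \<xi> \<bullet> b" using bD by (auto simp: face_dir_def)
        have "\<xi>0 \<bullet> b \<le> \<xi>0 \<bullet> p" using bmin pD by auto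
        moreover have "0 \<le> p $ j" using Dnn[OF pD] .
        ultimately have pj: "p $ j = 0" and "\<xi>0 \<bullet> p \<le> \<xi>0 \<bullet> a" using pl bj ab0 by (auto simp: xi)
        then have "p \<in> E" using Eiff pD by blast
        then obtain u where u: "0 \<le> u" "u \<le> 1" "p = (1 - u) *\<^sub>R a + u *\<^sub>R b" using segE by blast
        then have "p $ j = ((1 - u) *\<^sub>R a + u *\<^sub>R b) $ j" by simp
        then have "(1 - u) * a $ j = 0" using pj bj by simp
        then have "u = 1" using aj by simp
        then show "p \<in> {b}" using u by simp
      qed
    qed
    then show ?thesis unfolding is_vertex_def is_face_def using xo by blast
  qed
  show ?thesis
  proof
    show "{a, b} \<subseteq> {v. is_vertex \<Delta> v}" using vert_a vert_b by auto
    show "{v. is_vertex \<Delta> v} \<subseteq> {a, b}"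
    proof
      fix v assume "v \<in> {v. is_vertex \<Delta> v}"
      then obtain \<xi> where xo: "\<xi> \<in> nonneg_orthant" and fv: "face_dir \<Delta> \<xi> = {v}"
        unfolding is_vertex_def is_face_def by auto
      have vD: "v \<in> \<Delta>" and vmin: "\<forall>x\<in>\<Delta>. \<xi> \<bullet> v \<le> \<xi> \<bullet> x"
        using fv by (auto simp: face_dir_def)
      have uniq: "\<And>x. x \<in> \<Delta> \<Longrightarrow> \<xi> \<bullet> x \<le> \<xi> \<bullet> v \<Longrightarrow> x = v"
      proof -
        fix x assume "x \<in> \<Delta>" "\<xi> \<bullet> x \<le> \<xi> \<bullet> v"
        then have "x \<in> face_dir \<Delta> \<xi>" using vmin by (auto simp: face_dir_def intro: order_trans)
        then show "x = v" using fv by auto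
      qed
      obtain u w where u: "0 \<le> u" "u \<le> 1" and wo: "w \<in> nonneg_orthant"
        and vq: "v = (1 - u) *\<^sub>R a + u *\<^sub>R b + w" using step2[OF vD] by blast
      have "\<xi> \<bullet> v = (1 - u) * (\<xi> \<bullet> a) + u * (\<xi> \<bullet> b) + \<xi> \<bullet> w"
        by (simp add: vq inner_add_right)
      moreover have "0 \<le> \<xi> \<bullet> w" using inner_orth[OF xo wo] .
      ultimately have le: "(1 - u) * (\<xi> \<bullet> a) + u * (\<xi> \<bullet> b) \<le> \<xi> \<bullet> v" by simp
      show "v \<in> {a, b}"
      proof (cases "\<xi> \<bullet> a \<le> \<xi> \<bullet> b")
        case True
        have "u * (\<xi> \<bullet> a) \<le> u * (\<xi> \<bullet> b)" using True u by (simp add: mult_left_mono)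
        then have "\<xi> \<bullet> a \<le> \<xi> \<bullet> v" using le by (simp add: algebra_simps)
        then have "a = v" using uniq aD by blast
        then show ?thesis by simp
      next
        case False
        have "(1 - u) * (\<xi> \<bullet> b) \<le> (1 - u) * (\<xi> \<bullet> a)" using False u by (simp add: mult_left_mono)
        then have "\<xi> \<bullet> b \<le> \<xi> \<bullet> v" using le by (simp add: algebra_simps)
        then have "b = v" using uniq bD by blast
        then show ?thesis by simp
      qed
    qed
  qed
qed

end
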